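(* Let $\nu\ge1$, $N,K\ge1$, $j\in\mathbb{N}$, $\tau>0$, let $\Lambda_N=\mathrm{diag}(\lambda_{-N},\dots,\lambda_N)$ be a complex diagonal matrix, $Q$ an invertible complex $(2N+1)\times(2N+1)$ matrix, $\mathcal{L}_N=Q\Lambda_NQ^{-1}$, and let $\sigma_{K,0}$ be a constant such that $\|f-P_Kf\|_{C^0}\le\sigma_{K,0}\|f'\|_{C^0}$ for all $f\in C^1([-1,1],\mathbb{C})$. Let $D_N(t)$ be the diagonal matrix $D_N(t)=\tau\int_{-1}^t|e^{\tau(t-s)\Lambda_N}|\,ds$ (absolute value componentwise). Then for every $\varphi_N\in C([-1,1],\mathbb{C}^{2N+1})$, $$\Big\|(I-P_K)\Big(t\mapsto\tau\int_{-1}^te^{\tau(t-s)\mathcal{L}_N}\mathcal{D}^j\varphi_N(s)\,ds\Big)\Big\|_{\ell^1_\nu(C^0)}\le\tau\sigma_{K,0}\,\big\||\mathcal{D}^j|+|Q|\,|\Lambda_N|\,D_N(1)\,|Q^{-1}|\,|\mathcal{D}^j|\big\|_{B(\ell^1_\nu,\ell^1_\nu)}\|\varphi_N\|_{\ell^1_\nu(C^0)}.$$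
   Context: Vectors in $\mathbb{C}^{2N+1}$ are indexed by $n=-N,\dots,N$; $\mathcal{D}=\mathrm{diag}(in)_{|n|\le N}$, and $|\cdot|$ applied to a matrix denotes the entrywise absolute value. $\|v\|_{\ell^1_\nu}=\sum_{|n|\le N}|v_n|\nu^{|n|}$ on $\mathbb{C}^{2N+1}$ and $\|\cdot\|_{B(\ell^1_\nu,\ell^1_\nu)}$ is the induced operator norm. For a vector-valued function $\psi$, $\|\psi\|_{\ell^1_\nu(C^0)}=\sum_{|n|\le N}\|\psi_n\|_{C^0}\nu^{|n|}$ with $\|\cdot\|_{C^0}$ the sup norm on $[-1,1]$. $P_K$ maps $f\in C([-1,1],\mathbb{C})$ to its polynomial interpolant of degree $\le K$ at the Chebyshev points $t_k=\cos(\pi k/K)$, $k=0,\dots,K$, and acts componentwise on vector-valued functions. *)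

theory Defs
  imports "HOL-Analysis.Analysis" "HOL-Computational_Algebra.Polynomial"
begin

text \<open>Vectors in C^(2N+1) are functions int => complex, indexed by n in {-N..N};
  (2N+1)x(2N+1) complex matrices are functions int => int => complex, of which only
  the entries with indices in {-N..N} matter.\<close>

definition idx :: "nat \<Rightarrow> int set" where
  "idx N = {- int N .. int N}"

definition cm_mult :: "nat \<Rightarrow> (int \<Rightarrow> int \<Rightarrow> complex) \<Rightarrow> (int \<Rightarrow> int \<Rightarrow> complex) \<Rightarrow> (int \<Rightarrow> int \<Rightarrow> complex)" where
  "cm_mult N A B = (\<lambda>i j. \<Sum>k\<in>idx N. A i k * B k j)"

definition cm_add :: "(int \<Rightarrow> int \<Rightarrow> complex) \<Rightarrow> (int \<Rightarrow> int \<Rightarrow> complex) \<Rightarrow> (int \<Rightarrow> int \<Rightarrow> complex)" where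
  "cm_add A B = (\<lambda>i j. A i j + B i j)"

definition cm_id :: "int \<Rightarrow> int \<Rightarrow> complex" where
  "cm_id = (\<lambda>i j. if i = j then 1 else 0)"

definition cm_diag :: "(int \<Rightarrow> complex) \<Rightarrow> (int \<Rightarrow> int \<Rightarrow> complex)" where
  "cm_diag d = (\<lambda>i j. if i = j then d i else 0)"

definition cm_scale :: "complex \<Rightarrow> (int \<Rightarrow> int \<Rightarrow> complex) \<Rightarrow> (int \<Rightarrow> int \<Rightarrow> complex)" where
  "cm_scale c A = (\<lambda>i j. c * A i j)"

definition cm_abs :: "(int \<Rightarrow> int \<Rightarrow> complex) \<Rightarrow> (int \<Rightarrow> int \<Rightarrow> complex)" where
  "cm_abs A = (\<lambda>i j. complex_of_real (cmod (A i j)))"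

fun cm_pow :: "nat \<Rightarrow> (int \<Rightarrow> int \<Rightarrow> complex) \<Rightarrow> nat \<Rightarrow> (int \<Rightarrow> int \<Rightarrow> complex)" where
  "cm_pow N A 0 = cm_id"
| "cm_pow N A (Suc k) = cm_mult N A (cm_pow N A k)"

definition cm_exp :: "nat \<Rightarrow> (int \<Rightarrow> int \<Rightarrow> complex) \<Rightarrow> (int \<Rightarrow> int \<Rightarrow> complex)" where
  "cm_exp N A = (\<lambda>i j. (\<Sum>k. cm_pow N A k i j / of_nat (fact k)))"

definition cm_apply :: "nat \<Rightarrow> (int \<Rightarrow> int \<Rightarrow> complex) \<Rightarrow> (int \<Rightarrow> complex) \<Rightarrow> (int \<Rightarrow> complex)" where
  "cm_apply N A v = (\<lambda>i. \<Sum>k\<in>idx N. A i k * v k)"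

definition l1nu :: "nat \<Rightarrow> real \<Rightarrow> (int \<Rightarrow> complex) \<Rightarrow> real" where
  "l1nu N \<nu> v = (\<Sum>n\<in>idx N. cmod (v n) * \<nu> ^ nat \<bar>n\<bar>)"

definition opnorm_l1nu :: "nat \<Rightarrow> real \<Rightarrow> (int \<Rightarrow> int \<Rightarrow> complex) \<Rightarrow> real" where
  "opnorm_l1nu N \<nu> A = Sup {l1nu N \<nu> (cm_apply N A v) / l1nu N \<nu> v | v. l1nu N \<nu> v \<noteq> 0}"

definition c0norm :: "(real \<Rightarrow> complex) \<Rightarrow> real" where
  "c0norm f = (SUP x\<in>{-1..1}. cmod (f x))"

definition l1nu_C0 :: "nat \<Rightarrow> real \<Rightarrow> (int \<Rightarrow> real \<Rightarrow> complex) \<Rightarrow> real" where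
  "l1nu_C0 N \<nu> \<psi> = (\<Sum>n\<in>idx N. c0norm (\<psi> n) * \<nu> ^ nat \<bar>n\<bar>)"

definition cheb :: "nat \<Rightarrow> nat \<Rightarrow> real" where
  "cheb K k = cos (pi * real k / real K)"

definition interpK :: "nat \<Rightarrow> (real \<Rightarrow> complex) \<Rightarrow> (real \<Rightarrow> complex)" where
  "interpK K f = (let p = (THE p :: complex poly. degree p \<le> K \<and>
        (\<forall>k\<le>K. poly p (complex_of_real (cheb K k)) = f (cheb K k)))
     in (\<lambda>x. poly p (complex_of_real x)))"

text \<open>The differentiation operator D = diag(i n).\<close>
definition Dmat :: "int \<Rightarrow> int \<Rightarrow> complex" where
  "Dmat = cm_diag (\<lambda>n. \<i> * of_int n)"

end

theory Submission
  imports Defs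
begin


lemma finite_idx[simp]: "finite (idx N)"
  by (simp add: idx_def)

lemma sum_delta_l:
  fixes c :: "'b::comm_semiring_1"
  shows "finite S \<Longrightarrow> i \<in> S \<Longrightarrow> (\<Sum>m\<in>S. (if i = m then c else 0) * f m) = c * f i"
proof -
  assume "finite S" "i \<in> S"
  have "(\<Sum>m\<in>S. (if i = m then c else 0) * f m) = (\<Sum>m\<in>S. if i = m then c * f m else 0)"
    by (rule sum.cong) auto
  then show ?thesis using \<open>finite S\<close> \<open>i \<in> S\<close> by simp
qed

lemma sum_delta_r:
  fixes c :: "'b::comm_semiring_1"
  shows "finite S \<Longrightarrow> i \<in> S \<Longrightarrow> (\<Sum>m\<in>S. (if m = i then c else 0) * f m) = c * f i"
  using sum_delta_l[of S i c f] by (simp add: eq_commute)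

lemma pow_diag:
  assumes "i \<in> idx N"
  shows "cm_pow N (cm_diag d) k i j = (if i = j then d i ^ k else 0)"
  using assms
proof (induction k arbitrary: j)
  case 0 then show ?case by (simp add: cm_id_def)
next
  case (Suc k)
  have "cm_pow N (cm_diag d) (Suc k) i j = (\<Sum>m\<in>idx N. (if i = m then d i else 0) * cm_pow N (cm_diag d) k m j)"
    by (simp add: cm_mult_def cm_diag_def)
  also have "\<dots> = d i * cm_pow N (cm_diag d) k i j"
    using Suc.prems by (simp add: sum_delta_l)
  finally show ?case using Suc by simp
qed

lemma exp_series: "(\<lambda>k. x ^ k / of_nat (fact k)) sums exp (x::complex)"
proof -
  have "(\<lambda>k. x ^ k /\<^sub>R fact k) = (\<lambda>k. x ^ k / of_nat (fact k))"
    by (simp add: scaleR_conv_of_real divide_inverse mult.commute)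
  with exp_converges[of x] show ?thesis by simp
qed

lemma exp_diag:
  assumes "i \<in> idx N"
  shows "cm_exp N (cm_diag d) i j = (if i = j then exp (d i) else 0)"
  using sums_unique[OF exp_series[of "d i"]] assms
  by (auto simp: cm_exp_def pow_diag)

lemma scale_diag: "cm_scale c (cm_diag d) = cm_diag (\<lambda>i. c * d i)"
  by (auto simp: cm_scale_def cm_diag_def fun_eq_iff)

lemma mult_diag_left: "i \<in> idx N \<Longrightarrow> cm_mult N (cm_diag d) B i j = d i * B i j"
  by (simp add: cm_mult_def cm_diag_def sum_delta_l)

lemma scale_sim: "cm_scale c (cm_mult N Q (cm_mult N (cm_diag d) Qinv)) = cm_mult N Q (cm_mult N (cm_diag (\<lambda>i. c * d i)) Qinv)"
proof (intro ext)
  fix i j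
  have "c * (\<Sum>k\<in>idx N. Q i k * cm_mult N (cm_diag d) Qinv k j) = (\<Sum>k\<in>idx N. Q i k * cm_mult N (cm_diag (\<lambda>i. c * d i)) Qinv k j)"
    unfolding sum_distrib_left by (rule sum.cong[OF refl]) (simp add: mult_diag_left mult_ac)
  then show "cm_scale c (cm_mult N Q (cm_mult N (cm_diag d) Qinv)) i j = cm_mult N Q (cm_mult N (cm_diag (\<lambda>i. c * d i)) Qinv) i j"
    by (simp add: cm_scale_def cm_mult_def[of N Q])
qed



lemma pow_sim:
  assumes Qinv1: "\<forall>i\<in>idx N. \<forall>k\<in>idx N. cm_mult N Q Qinv i k = cm_id i k"
    and Qinv2: "\<forall>i\<in>idx N. \<forall>k\<in>idx N. cm_mult N Qinv Q i k = cm_id i k"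
    and "i \<in> idx N" "j \<in> idx N"
  shows "cm_pow N (cm_mult N Q (cm_mult N (cm_diag d) Qinv)) k i j = (\<Sum>a\<in>idx N. Q i a * d a ^ k * Qinv a j)"
  using assms(3)
proof (induction k arbitrary: i)
  case 0 then show ?case using Qinv1 assms(4) by (auto simp: cm_mult_def)
next
  case (Suc k)
  let ?L = "cm_mult N Q (cm_mult N (cm_diag d) Qinv)"
  have "cm_pow N ?L (Suc k) i j = (\<Sum>b\<in>idx N. ?L i b * (\<Sum>a\<in>idx N. Q b a * d a ^ k * Qinv a j))"
    using Suc.IH by (simp add: cm_mult_def[of N ?L])
  also have "\<dots> = (\<Sum>b\<in>idx N. (\<Sum>c\<in>idx N. Q i c * d c * Qinv c b) * (\<Sum>a\<in>idx N. Q b a * d a ^ k * Qinv a j))"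
    by (simp add: cm_mult_def[of N Q] mult_diag_left mult_ac)
  also have "\<dots> = (\<Sum>b\<in>idx N. \<Sum>c\<in>idx N. \<Sum>a\<in>idx N. Q i c * d c * Qinv c b * (Q b a * d a ^ k * Qinv a j))"
    by (simp add: sum_product)
  also have "\<dots> = (\<Sum>c\<in>idx N. \<Sum>b\<in>idx N. \<Sum>a\<in>idx N. Q i c * d c * Qinv c b * (Q b a * d a ^ k * Qinv a j))"
    by (rule sum.swap)
  also have "\<dots> = (\<Sum>c\<in>idx N. \<Sum>a\<in>idx N. \<Sum>b\<in>idx N. Q i c * d c * Qinv c b * (Q b a * d a ^ k * Qinv a j))"
    by (rule sum.cong[OF refl], rule sum.swap)
  also have "\<dots> = (\<Sum>c\<in>idx N. \<Sum>a\<in>idx N. Q i c * d c * (\<Sum>b\<in>idx N. Qinv c b * Q b a) * d a ^ k * Qinv a j)"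
    by (intro sum.cong refl) (simp add: sum_distrib_left sum_distrib_right mult_ac)
  also have "\<dots> = (\<Sum>c\<in>idx N. \<Sum>a\<in>idx N. (if c = a then 1 else 0) * (Q i c * d c * d a ^ k * Qinv a j))"
    using Qinv2 by (intro sum.cong refl) (simp add: cm_mult_def cm_id_def)
  also have "\<dots> = (\<Sum>c\<in>idx N. Q i c * d c ^ Suc k * Qinv c j)"
    by (intro sum.cong refl, subst sum_delta_l) (auto simp: mult_ac)
  finally show ?case .
qed

lemma exp_sim:
  assumes Qinv1: "\<forall>i\<in>idx N. \<forall>k\<in>idx N. cm_mult N Q Qinv i k = cm_id i k"
    and Qinv2: "\<forall>i\<in>idx N. \<forall>k\<in>idx N. cm_mult N Qinv Q i k = cm_id i k"
    and "i \<in> idx N" "j \<in> idx N"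
  shows "cm_exp N (cm_mult N Q (cm_mult N (cm_diag d) Qinv)) i j = (\<Sum>a\<in>idx N. Q i a * exp (d a) * Qinv a j)"
proof -
  have "(\<lambda>k. \<Sum>a\<in>idx N. Q i a * Qinv a j * (d a ^ k / of_nat (fact k))) sums (\<Sum>a\<in>idx N. Q i a * Qinv a j * exp (d a))"
    by (intro sums_sum sums_mult exp_series)
  then have "(\<lambda>k. cm_pow N (cm_mult N Q (cm_mult N (cm_diag d) Qinv)) k i j / of_nat (fact k)) sums (\<Sum>a\<in>idx N. Q i a * exp (d a) * Qinv a j)"
    by (simp add: pow_sim[OF assms] sum_divide_distrib mult_ac)
  then show ?thesis unfolding cm_exp_def by (rule sums_unique[symmetric])
qed



lemma c0_bdd: "continuous_on {-1..1} f \<Longrightarrow> bdd_above ((\<lambda>x. cmod (f x)) ` {-1..1::real})"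
  by (intro bounded_imp_bdd_above compact_imp_bounded compact_continuous_image continuous_intros) auto

lemma c0_upper: "continuous_on {-1..1} f \<Longrightarrow> s \<in> {-1..1} \<Longrightarrow> cmod (f s) \<le> c0norm f"
  unfolding c0norm_def by (rule cSUP_upper) (auto simp: c0_bdd)

lemma c0_least: "(\<And>s. s \<in> {-1..1} \<Longrightarrow> cmod (f s) \<le> B) \<Longrightarrow> c0norm f \<le> B"
  unfolding c0norm_def by (rule cSUP_least) auto

lemma c0_nonneg: "continuous_on {-1..1} f \<Longrightarrow> 0 \<le> c0norm f"
  using c0_upper[of f 0] by (auto intro: order_trans[OF norm_ge_zero])

lemma cheb_inj: "K \<ge> 1 \<Longrightarrow> inj_on (cheb K) {..K}"
proof (rule inj_onI)
  fix k k' assume K: "K \<ge> 1" and kk: "k \<in> {..K}" "k' \<in> {..K}" and e: "cheb K k = cheb K k'"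
  have b: "0 \<le> pi * real k / real K" "pi * real k / real K \<le> pi"
          "0 \<le> pi * real k' / real K" "pi * real k' / real K \<le> pi"
    using K kk by (auto simp: field_simps)
  from cos_inj_pi[OF b] e have "pi * real k / real K = pi * real k' / real K" by (simp add: cheb_def)
  with K show "k = k'" by (simp add: field_simps)
qed

lemma cheb_range: "cheb K k \<in> {-1..1}"
  by (simp add: cheb_def)

lemma interp_zero_unique:
  assumes K: "K \<ge> 1" and p: "degree p \<le> K" "\<forall>k\<le>K. poly p (complex_of_real (cheb K k)) = 0"
  shows "p = 0"
proof (rule ccontr)
  assume "p \<noteq> 0"
  have sub: "(\<lambda>k. complex_of_real (cheb K k)) ` {..K} \<subseteq> {x. poly p x = 0}" using p by auto
  have inj: "inj_on (\<lambda>k. complex_of_real (cheb K k)) {..K}"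
    using cheb_inj[OF K] by (auto simp: inj_on_def)
  have "K + 1 = card ((\<lambda>k. complex_of_real (cheb K k)) ` {..K})"
    using card_image[OF inj] by simp
  also have "\<dots> \<le> card {x. poly p x = 0}"
    by (rule card_mono[OF poly_roots_finite[OF \<open>p \<noteq> 0\<close>] sub])
  also have "\<dots> \<le> degree p" by (rule card_poly_roots_bound[OF \<open>p \<noteq> 0\<close>])
  finally show False using p by simp
qed

lemma sigma_nonneg:
  assumes K: "K \<ge> 1"
    and sigma: "\<forall>f f'. (\<forall>x\<in>{-1..1}. (f has_vector_derivative f' x) (at x within {-1..1}))
                   \<and> continuous_on {-1..1} f'
                 \<longrightarrow> c0norm (\<lambda>x. f x - interpK K f x) \<le> \<sigma> * c0norm f'"
  shows "\<sigma> \<ge> 0"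
proof -
  define P where "P = (\<Prod>k\<in>{..K}. [:- complex_of_real (cheb K k), 1:])"
  define f where "f = (\<lambda>x::real. poly P (complex_of_real x))"
  define f' where "f' = (\<lambda>x::real. poly (pderiv P) (complex_of_real x))"
  have P0: "P \<noteq> 0" unfolding P_def by (auto simp: prod_zero_iff)
  have Pz: "poly P (complex_of_real (cheb K k)) = 0" if "k \<le> K" for k
    unfolding P_def poly_prod using that by (intro prod_zero) auto
  have der: "(f has_vector_derivative f' x) (at x within {-1..1})" for x
    unfolding f_def f'_def by (rule has_vector_derivative_real_field) (rule poly_DERIV)
  have f'c: "continuous_on {-1..1} f'" unfolding f'_def by (intro continuous_intros)
  have fc: "continuous_on {-1..1} f" unfolding f_def by (intro continuous_intros)
  have "(THE p :: complex poly. degree p \<le> K \<and> (\<forall>k\<le>K. poly p (complex_of_real (cheb K k)) = f (cheb K k))) = 0"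
    by (rule the_equality) (auto simp: f_def Pz intro: interp_zero_unique[OF K])
  then have interp: "interpK K f = (\<lambda>x. 0)" by (simp add: interpK_def)
  have le: "c0norm f \<le> \<sigma> * c0norm f'"
    using sigma[rule_format, of f f'] der f'c by (simp add: interp)
  have fin: "finite {x::real. poly P (complex_of_real x) = 0}"
    using finite_vimageI[OF poly_roots_finite[OF P0], of complex_of_real] by (simp add: inj_on_def vimage_def)
  have "infinite {-1..1::real}" by (simp add: infinite_Icc)
  then obtain x where x: "x \<in> {-1..1}" "x \<notin> {x::real. poly P (complex_of_real x) = 0}"
    using Diff_infinite_finite[OF fin] by (meson ex_in_conv finite.emptyI infinite_super subsetI DiffE)
  have "0 < cmod (f x)" using x by (simp add: f_def)
  also have "\<dots> \<le> c0norm f" by (rule c0_upper[OF fc x(1)])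
  finally have "0 < \<sigma> * c0norm f'" using le by linarith
  with c0_nonneg[OF f'c] show ?thesis by (meson linorder_not_le mult_nonpos_nonneg not_less order_less_imp_le)
qed



lemma deriv_expt:
  "((\<lambda>t. exp (complex_of_real (\<tau>*t) * l)) has_vector_derivative (complex_of_real \<tau> * l * exp (complex_of_real (\<tau>*x) * l))) (at x within S)"
proof -
  have d: "((\<lambda>z. exp (complex_of_real \<tau> * z * l)) has_field_derivative (exp (complex_of_real \<tau> * complex_of_real x * l) * (complex_of_real \<tau> * l))) (at (complex_of_real x))"
    by (auto intro!: derivative_eq_intros)
  have eq: "(\<lambda>t. exp (complex_of_real (\<tau>*t) * l)) = (\<lambda>t. (\<lambda>z. exp (complex_of_real \<tau> * z * l)) (complex_of_real t))"
    by (simp add: of_real_mult)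
  have eq2: "complex_of_real \<tau> * l * exp (complex_of_real (\<tau>*x) * l) = exp (complex_of_real \<tau> * complex_of_real x * l) * (complex_of_real \<tau> * l)"
    by (simp add: of_real_mult)
  show ?thesis unfolding eq eq2 by (rule has_vector_derivative_real_field[OF d])
qed

lemma int_closed:
  fixes c x :: real
  assumes "x \<ge> -1"
  shows "integral {-1..x} (\<lambda>s. exp (c * (x - s))) = (if c = 0 then x + 1 else (exp (c * (x + 1)) - 1) / c)"
proof (cases "c = 0")
  case True then show ?thesis using assms by (simp add: integral_const_real content_real)
next
  case False
  have "((\<lambda>s. exp (c * (x - s))) has_integral ((\<lambda>s. - exp (c * (x - s)) / c) x - (\<lambda>s. - exp (c * (x - s)) / c) (-1))) {-1..x}"
  proof (rule fundamental_theorem_of_calculus[OF assms])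
    fix s assume "s \<in> {-1..x}"
    have "((\<lambda>s. - exp (c * (x - s)) / c) has_real_derivative (- (exp (c * (x - s)) * (c * (0 - 1))) / c)) (at s within {-1..x})"
      by (auto intro!: derivative_eq_intros)
    then show "((\<lambda>s. - exp (c * (x - s)) / c) has_vector_derivative exp (c * (x - s))) (at s within {-1..x})"
      using False by (simp add: has_real_derivative_iff_has_vector_derivative)
  qed
  then have "integral {-1..x} (\<lambda>s. exp (c * (x - s))) = - exp (c * (x - x)) / c - - exp (c * (x - -1)) / c"
    by (rule integral_unique)
  also have "\<dots> = (exp (c * (x + 1)) - 1) / c" by (simp add: diff_divide_distrib)
  finally show ?thesis using False by simp
qed

lemma int_mono:
  fixes c x :: real
  assumes "x \<in> {-1..1}"
  shows "integral {-1..x} (\<lambda>s. exp (c * (x - s))) \<le> integral {-1..1} (\<lambda>s. exp (c * (1 - s)))"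
proof -
  have x: "-1 \<le> x" "x \<le> 1" using assms by auto
  consider "c = 0" | "c > 0" | "c < 0" using linorder_less_linear[of c 0] by blast
  then show ?thesis
  proof cases
    case 1 then show ?thesis using x by (simp add: int_closed)
  next
    case 2
    have "exp (c * (x + 1)) \<le> exp (c * (1 + 1))" using 2 x by (intro exp_le_cancel_iff[THEN iffD2] mult_left_mono) auto
    then have "(exp (c * (x + 1)) - 1) / c \<le> (exp (c * (1 + 1)) - 1) / c"
      using 2 by (intro divide_right_mono) auto
    then show ?thesis using 2 x by (simp add: int_closed)
  next
    case 3
    have "exp (c * (1 + 1)) \<le> exp (c * (x + 1))" using 3 x by (intro exp_le_cancel_iff[THEN iffD2] mult_left_mono_neg) auto
    then have "(exp (c * (x + 1)) - 1) / c \<le> (exp (c * (1 + 1)) - 1) / c"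
      using 3 by (intro divide_right_mono_neg) auto
    then show ?thesis using 3 x by (simp add: int_closed)
  qed
qed



lemma cont_integrand:
  assumes "continuous_on {-1..1} w"
  shows "continuous_on {-1..1} (\<lambda>s. exp (- (complex_of_real (\<tau> * s) * l)) * w s)"
  using assms by (intro continuous_intros) auto

lemma Ider:
  assumes "continuous_on {-1..1} w" "x \<in> {-1..1}"
  shows "((\<lambda>t. integral {-1..t} (\<lambda>s. exp (- (complex_of_real (\<tau> * s) * l)) * w s)) has_vector_derivative
          (exp (- (complex_of_real (\<tau> * x) * l)) * w x)) (at x within {-1..1})"
  by (rule integral_has_vector_derivative[OF cont_integrand[OF assms(1)] assms(2)])

lemma Jder:
  assumes "continuous_on {-1..1} w" "x \<in> {-1..1}"
  shows "((\<lambda>t. exp (complex_of_real (\<tau> * t) * l) * integral {-1..t} (\<lambda>s. exp (- (complex_of_real (\<tau> * s) * l)) * w s)) has_vector_derivative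
          (w x + complex_of_real \<tau> * l * (exp (complex_of_real (\<tau> * x) * l) * integral {-1..x} (\<lambda>s. exp (- (complex_of_real (\<tau> * s) * l)) * w s)))) (at x within {-1..1})"
proof -
  have e: "exp (complex_of_real (\<tau> * x) * l) * (exp (- (complex_of_real (\<tau> * x) * l)) * w x) = w x"
    by (simp add: mult.assoc[symmetric] exp_minus_inverse)
  show ?thesis
    by (rule has_vector_derivative_eq_rhs[OF has_vector_derivative_mult[OF deriv_expt[of \<tau> l x "{-1..1}"] Ider[OF assms, of \<tau> l]]])
      (simp add: e algebra_simps exp_minus_inverse)
qed

lemma Jcont:
  assumes "continuous_on {-1..1} w"
  shows "continuous_on {-1..1} (\<lambda>t. exp (complex_of_real (\<tau> * t) * l) * integral {-1..t} (\<lambda>s. exp (- (complex_of_real (\<tau> * s) * l)) * w s))"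
  unfolding continuous_on_eq_continuous_within
  using has_vector_derivative_continuous[OF Jder[OF assms]] by blast

lemma Jeq:
  assumes "continuous_on {-1..1} w" "x \<in> {-1..1}"
  shows "exp (complex_of_real (\<tau> * x) * l) * integral {-1..x} (\<lambda>s. exp (- (complex_of_real (\<tau> * s) * l)) * w s)
       = integral {-1..x} (\<lambda>s. exp (complex_of_real (\<tau> * (x-s)) * l) * w s)"
proof -
  have "exp (complex_of_real (\<tau> * x) * l) * integral {-1..x} (\<lambda>s. exp (- (complex_of_real (\<tau> * s) * l)) * w s)
      = integral {-1..x} (\<lambda>s. exp (complex_of_real (\<tau> * x) * l) * (exp (- (complex_of_real (\<tau> * s) * l)) * w s))"
    by (rule integral_mult_right[symmetric])
  also have "\<dots> = integral {-1..x} (\<lambda>s. exp (complex_of_real (\<tau> * (x-s)) * l) * w s)"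
  proof (rule integral_cong)
    fix s
    have "exp (complex_of_real (\<tau> * (x-s)) * l) = exp (complex_of_real (\<tau> * x) * l) * exp (- (complex_of_real (\<tau> * s) * l))"
      by (subst exp_add[symmetric]) (simp add: algebra_simps)
    then show "exp (complex_of_real (\<tau> * x) * l) * (exp (- (complex_of_real (\<tau> * s) * l)) * w s) = exp (complex_of_real (\<tau> * (x-s)) * l) * w s"
      by (simp add: mult.assoc)
  qed
  finally show ?thesis .
qed

lemma Jbound:
  assumes wc: "continuous_on {-1..1} w" and x: "x \<in> {-1..1}"
    and W: "\<forall>s\<in>{-1..1}. cmod (w s) \<le> W"
  shows "cmod (exp (complex_of_real (\<tau> * x) * l) * integral {-1..x} (\<lambda>s. exp (- (complex_of_real (\<tau> * s) * l)) * w s))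
         \<le> W * integral {-1..1} (\<lambda>s. cmod (exp (complex_of_real (\<tau> * (1-s)) * l)))"
proof -
  have sub: "{-1..x} \<subseteq> {-1..1}" using x by auto
  have W0: "0 \<le> W" using W x by (meson norm_ge_zero order_trans)
  have c1: "continuous_on {-1..x} (\<lambda>s. exp (complex_of_real (\<tau> * (x-s)) * l) * w s)"
    using continuous_on_subset[OF wc sub] by (intro continuous_intros) auto
  have c2: "continuous_on {-1..x} (\<lambda>s. exp ((\<tau> * Re l) * (x - s)) * W)"
    by (intro continuous_intros)
  have "cmod (integral {-1..x} (\<lambda>s. exp (complex_of_real (\<tau> * (x-s)) * l) * w s))
        \<le> integral {-1..x} (\<lambda>s. exp ((\<tau> * Re l) * (x - s)) * W)"
  proof (rule integral_norm_bound_integral)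
    show "(\<lambda>s. exp (complex_of_real (\<tau> * (x-s)) * l) * w s) integrable_on {-1..x}"
      by (rule integrable_continuous_interval[OF c1])
    show "(\<lambda>s. exp ((\<tau> * Re l) * (x - s)) * W) integrable_on {-1..x}"
      by (rule integrable_continuous_interval[OF c2])
    fix s assume s: "s \<in> {-1..x}"
    then have "cmod (w s) \<le> W" using W sub by auto
    then show "cmod (exp (complex_of_real (\<tau> * (x-s)) * l) * w s) \<le> exp ((\<tau> * Re l) * (x - s)) * W"
      by (simp add: norm_mult norm_exp_eq_Re mult_left_mono mult_ac)
  qed
  also have "\<dots> = W * integral {-1..x} (\<lambda>s. exp ((\<tau> * Re l) * (x - s)))"
    by (simp add: integral_mult_left mult.commute)
  also have "\<dots> \<le> W * integral {-1..1} (\<lambda>s. exp ((\<tau> * Re l) * (1 - s)))"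
    by (rule mult_left_mono[OF int_mono[OF x] W0])
  also have "\<dots> = W * integral {-1..1} (\<lambda>s. cmod (exp (complex_of_real (\<tau> * (1-s)) * l)))"
    by (simp add: norm_exp_eq_Re mult_ac)
  finally show ?thesis using Jeq[OF wc x] by simp
qed



lemma l1nu_nonneg: "0 \<le> l1nu N \<nu> v" if "\<nu> \<ge> 1"
  unfolding l1nu_def using that by (intro sum_nonneg mult_nonneg_nonneg) auto

lemma opnorm_bdd:
  assumes nu: "\<nu> \<ge> 1"
  shows "bdd_above {l1nu N \<nu> (cm_apply N A v) / l1nu N \<nu> v | v. l1nu N \<nu> v \<noteq> 0}"
proof -
  let ?C = "\<Sum>n\<in>idx N. \<Sum>m\<in>idx N. cmod (A n m) * \<nu> ^ nat \<bar>n\<bar>"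
  have "l1nu N \<nu> (cm_apply N A v) / l1nu N \<nu> v \<le> ?C" if v: "l1nu N \<nu> v \<noteq> 0" for v
  proof -
    have pos: "0 < l1nu N \<nu> v" using l1nu_nonneg[OF nu, of N v] v by linarith
    have vm: "cmod (v m) \<le> l1nu N \<nu> v" if "m \<in> idx N" for m
    proof -
      have "cmod (v m) \<le> cmod (v m) * \<nu> ^ nat \<bar>m\<bar>"
        using nu by (simp add: mult_le_cancel_left1 one_le_power)
      also have "\<dots> \<le> l1nu N \<nu> v" unfolding l1nu_def
        by (rule member_le_sum[OF that]) (use nu in auto)
      finally show ?thesis .
    qed
    have "l1nu N \<nu> (cm_apply N A v) = (\<Sum>n\<in>idx N. cmod (\<Sum>m\<in>idx N. A n m * v m) * \<nu> ^ nat \<bar>n\<bar>)"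
      by (simp add: l1nu_def cm_apply_def)
    also have "\<dots> \<le> (\<Sum>n\<in>idx N. (\<Sum>m\<in>idx N. cmod (A n m) * \<nu> ^ nat \<bar>n\<bar>) * l1nu N \<nu> v)"
    proof (rule sum_mono)
      fix n assume n: "n \<in> idx N"
      have a: "cmod (\<Sum>m\<in>idx N. A n m * v m) \<le> (\<Sum>m\<in>idx N. cmod (A n m) * l1nu N \<nu> v)"
        by (rule order_trans[OF norm_sum sum_mono]) (auto simp: norm_mult intro!: mult_left_mono vm)
      have p: "0 \<le> \<nu> ^ nat \<bar>n\<bar>" using nu by simp
      have eq: "(\<Sum>m\<in>idx N. cmod (A n m) * \<nu> ^ nat \<bar>n\<bar>) * l1nu N \<nu> v = (\<Sum>m\<in>idx N. cmod (A n m) * l1nu N \<nu> v) * \<nu> ^ nat \<bar>n\<bar>"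
        by (simp add: sum_distrib_right sum_distrib_left mult_ac)
      show "cmod (\<Sum>m\<in>idx N. A n m * v m) * \<nu> ^ nat \<bar>n\<bar> \<le> (\<Sum>m\<in>idx N. cmod (A n m) * \<nu> ^ nat \<bar>n\<bar>) * l1nu N \<nu> v"
        unfolding eq by (rule mult_right_mono[OF a p])
    qed
    also have "\<dots> = ?C * l1nu N \<nu> v" by (simp add: sum_distrib_right)
    finally show ?thesis using pos by (simp add: divide_le_eq)
  qed
  then show ?thesis unfolding bdd_above_def by blast
qed



theorem lemma4p8:
  fixes \<nu> \<tau> \<sigma> :: real and N K j :: nat
    and \<Lambda> :: "int \<Rightarrow> complex"
    and Q Qinv :: "int \<Rightarrow> int \<Rightarrow> complex"
    and \<phi> :: "int \<Rightarrow> real \<Rightarrow> complex"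
  assumes "\<nu> \<ge> 1" and "N \<ge> 1" and "K \<ge> 1" and "\<tau> > 0"
    and Qinv1: "\<forall>i\<in>idx N. \<forall>k\<in>idx N. cm_mult N Q Qinv i k = cm_id i k"
    and Qinv2: "\<forall>i\<in>idx N. \<forall>k\<in>idx N. cm_mult N Qinv Q i k = cm_id i k"
    and sigma: "\<forall>f f'. (\<forall>x\<in>{-1..1}. (f has_vector_derivative f' x) (at x within {-1..1}))
                   \<and> continuous_on {-1..1} f'
                 \<longrightarrow> c0norm (\<lambda>x. f x - interpK K f x) \<le> \<sigma> * c0norm f'"
    and phi_cont: "\<forall>n\<in>idx N. continuous_on {-1..1} (\<phi> n)"
  shows
   "let L = cm_mult N Q (cm_mult N (cm_diag \<Lambda>) Qinv);
        Dj = cm_pow N Dmat j;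
        g = (\<lambda>n t. complex_of_real \<tau> * integral {-1..t}
               (\<lambda>s. cm_apply N (cm_exp N (cm_scale (complex_of_real (\<tau> * (t - s))) L))
                       (cm_apply N Dj (\<lambda>m. \<phi> m s)) n));
        D1 = (\<lambda>a b. complex_of_real (\<tau> * integral {-1..1}
               (\<lambda>s. cmod (cm_exp N (cm_scale (complex_of_real (\<tau> * (1 - s))) (cm_diag \<Lambda>)) a b))));
        M = cm_add (cm_abs Dj)
              (cm_mult N (cm_abs Q) (cm_mult N (cm_abs (cm_diag \<Lambda>))
                 (cm_mult N D1 (cm_mult N (cm_abs Qinv) (cm_abs Dj)))))
    in l1nu_C0 N \<nu> (\<lambda>n t. g n t - interpK K (g n) t)
       \<le> \<tau> * \<sigma> * opnorm_l1nu N \<nu> M * l1nu_C0 N \<nu> \<phi>"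
proof -
  note nu = assms(1) and tau = assms(4)
  define L where "L = cm_mult N Q (cm_mult N (cm_diag \<Lambda>) Qinv)"
  define Dj where "Dj = cm_pow N Dmat j"
  define g where "g = (\<lambda>n t. complex_of_real \<tau> * integral {-1..t}
               (\<lambda>s. cm_apply N (cm_exp N (cm_scale (complex_of_real (\<tau> * (t - s))) L))
                       (cm_apply N Dj (\<lambda>m. \<phi> m s)) n))"
  define D1 where "D1 = (\<lambda>a b. complex_of_real (\<tau> * integral {-1..1}
               (\<lambda>s. cmod (cm_exp N (cm_scale (complex_of_real (\<tau> * (1 - s))) (cm_diag \<Lambda>)) a b))))"
  define M where "M = cm_add (cm_abs Dj)
              (cm_mult N (cm_abs Q) (cm_mult N (cm_abs (cm_diag \<Lambda>))
                 (cm_mult N D1 (cm_mult N (cm_abs Qinv) (cm_abs Dj)))))"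
  define v where "v = (\<lambda>m s. \<Sum>l\<in>idx N. Dj m l * \<phi> l s)"
  define w where "w = (\<lambda>a s. \<Sum>k\<in>idx N. Qinv a k * v k s)"
  define II where "II = (\<lambda>a t. integral {-1..t} (\<lambda>s. exp (- (complex_of_real (\<tau> * s) * \<Lambda> a)) * w a s))"
  define J where "J = (\<lambda>a t. exp (complex_of_real (\<tau> * t) * \<Lambda> a) * II a t)"
  define G where "G = (\<lambda>n t. complex_of_real \<tau> * (\<Sum>a\<in>idx N. Q n a * J a t))"
  define G' where "G' = (\<lambda>n t. complex_of_real \<tau> * (\<Sum>a\<in>idx N. Q n a * (w a t + complex_of_real \<tau> * \<Lambda> a * J a t)))"
  define \<Phi> where "\<Phi> = (\<lambda>m. c0norm (\<phi> m))"
  define X where "X = (\<lambda>a. integral {-1..1} (\<lambda>s. cmod (exp (complex_of_real (\<tau> * (1 - s)) * \<Lambda> a))))"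
  define WW where "WW = (\<lambda>a. \<Sum>k\<in>idx N. cmod (Qinv a k) * (\<Sum>m\<in>idx N. cmod (Dj k m) * \<Phi> m))"
  define B where "B = (\<lambda>n. \<Sum>m\<in>idx N. (cmod (Dj n m) + (\<Sum>a\<in>idx N. cmod (Q n a) * (cmod (\<Lambda> a) * (\<tau> * X a * (\<Sum>d\<in>idx N. cmod (Qinv a d) * cmod (Dj d m)))))) * \<Phi> m)"

  have sig0: "\<sigma> \<ge> 0" by (rule sigma_nonneg[OF assms(3) sigma])
  have vc: "continuous_on {-1..1} (v m)" for m
    unfolding v_def using phi_cont by (intro continuous_on_sum continuous_on_mult continuous_on_const) auto
  have wc: "continuous_on {-1..1} (w a)" for a
    unfolding w_def using vc by (intro continuous_on_sum continuous_on_mult continuous_on_const) auto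
  have Phi_nonneg: "0 \<le> \<Phi> m" if "m \<in> idx N" for m
    unfolding \<Phi>_def using phi_cont that by (simp add: c0_nonneg)
  have phib: "cmod (\<phi> m s) \<le> \<Phi> m" if "m \<in> idx N" "s \<in> {-1..1}" for m s
    unfolding \<Phi>_def using phi_cont that by (simp add: c0_upper)

  have integrand: "cm_apply N (cm_exp N (cm_scale (complex_of_real (\<tau> * (t - s))) L)) (cm_apply N Dj (\<lambda>m. \<phi> m s)) n
      = (\<Sum>a\<in>idx N. Q n a * (exp (complex_of_real (\<tau> * (t - s)) * \<Lambda> a) * w a s))" if n: "n \<in> idx N" for n t s
  proof -
    have Lsc: "cm_scale (complex_of_real (\<tau> * (t - s))) L = cm_mult N Q (cm_mult N (cm_diag (\<lambda>i. complex_of_real (\<tau> * (t - s)) * \<Lambda> i)) Qinv)"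
      unfolding L_def by (rule scale_sim)
    have E: "cm_exp N (cm_scale (complex_of_real (\<tau> * (t - s))) L) n k = (\<Sum>a\<in>idx N. Q n a * exp (complex_of_real (\<tau> * (t - s)) * \<Lambda> a) * Qinv a k)"
      if "k \<in> idx N" for k
      unfolding Lsc using exp_sim[OF Qinv1 Qinv2 n that] by simp
    have "cm_apply N (cm_exp N (cm_scale (complex_of_real (\<tau> * (t - s))) L)) (cm_apply N Dj (\<lambda>m. \<phi> m s)) n
        = (\<Sum>k\<in>idx N. (\<Sum>a\<in>idx N. Q n a * exp (complex_of_real (\<tau> * (t - s)) * \<Lambda> a) * Qinv a k) * v k s)"
      unfolding cm_apply_def v_def by (intro sum.cong refl, subst E) auto
    also have "\<dots> = (\<Sum>k\<in>idx N. \<Sum>a\<in>idx N. Q n a * exp (complex_of_real (\<tau> * (t - s)) * \<Lambda> a) * Qinv a k * v k s)"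
      by (simp add: sum_distrib_right)
    also have "\<dots> = (\<Sum>a\<in>idx N. \<Sum>k\<in>idx N. Q n a * exp (complex_of_real (\<tau> * (t - s)) * \<Lambda> a) * Qinv a k * v k s)"
      by (rule sum.swap)
    also have "\<dots> = (\<Sum>a\<in>idx N. Q n a * (exp (complex_of_real (\<tau> * (t - s)) * \<Lambda> a) * w a s))"
      unfolding w_def by (simp add: sum_distrib_left sum_distrib_right mult_ac)
    finally show ?thesis .
  qed

  have Jint: "J a t = integral {-1..t} (\<lambda>s. exp (complex_of_real (\<tau> * (t - s)) * \<Lambda> a) * w a s)"
    if "t \<in> {-1..1}" for a t
    unfolding J_def II_def by (rule Jeq[OF wc that])
  have gG: "g n t = G n t" if n: "n \<in> idx N" and t: "t \<in> {-1..1}" for n t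
  proof -
    have sub: "{-1..t} \<subseteq> {-1..1}" using t by auto
    have int: "(\<lambda>s. Q n a * (exp (complex_of_real (\<tau> * (t - s)) * \<Lambda> a) * w a s)) integrable_on {-1..t}" for a
      by (rule integrable_continuous_interval, rule continuous_on_subset[OF _ sub]) (intro continuous_intros wc)
    have "g n t = complex_of_real \<tau> * integral {-1..t} (\<lambda>s. \<Sum>a\<in>idx N. Q n a * (exp (complex_of_real (\<tau> * (t - s)) * \<Lambda> a) * w a s))"
      by (simp only: g_def integrand[OF n])
    also have "\<dots> = complex_of_real \<tau> * (\<Sum>a\<in>idx N. integral {-1..t} (\<lambda>s. Q n a * (exp (complex_of_real (\<tau> * (t - s)) * \<Lambda> a) * w a s)))"
      by (subst integral_sum) (use int in auto)
    also have "\<dots> = G n t"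
      by (simp add: G_def integral_mult_right Jint[OF t])
    finally show ?thesis .
  qed

  have Gder: "(G n has_vector_derivative G' n x) (at x within {-1..1})" if x: "x \<in> {-1..1}" for n x
  proof -
    have Jd: "(J a has_vector_derivative (w a x + complex_of_real \<tau> * \<Lambda> a * J a x)) (at x within {-1..1})" for a
      unfolding J_def II_def by (rule Jder[OF wc x])
    show ?thesis
      unfolding G_def G'_def by (intro has_vector_derivative_mult_right has_vector_derivative_sum Jd)
  qed

  have Jc: "continuous_on {-1..1} (J a)" for a
    unfolding J_def II_def by (rule Jcont[OF wc])
  have G'c: "continuous_on {-1..1} (G' n)" for n
    unfolding G'_def by (intro continuous_on_mult continuous_on_sum continuous_on_add continuous_on_const wc Jc)

  have vbound: "cmod (v n x) \<le> (\<Sum>m\<in>idx N. cmod (Dj n m) * \<Phi> m)" if x: "x \<in> {-1..1}" for n x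
    unfolding v_def
    by (rule order_trans[OF norm_sum sum_mono]) (auto simp: norm_mult intro!: mult_left_mono phib x)
  have wbound: "\<forall>s\<in>{-1..1}. cmod (w a s) \<le> WW a" for a
  proof
    fix s :: real assume s: "s \<in> {-1..1}"
    show "cmod (w a s) \<le> WW a"
      unfolding w_def WW_def
      by (rule order_trans[OF norm_sum sum_mono]) (auto simp: norm_mult intro!: mult_left_mono vbound s)
  qed
  have Jbd: "cmod (J a x) \<le> WW a * X a" if x: "x \<in> {-1..1}" for a x
    unfolding J_def II_def X_def by (rule Jbound[OF wc x wbound])
  have Qw: "(\<Sum>a\<in>idx N. Q n a * w a x) = v n x" if n: "n \<in> idx N" for n x
  proof -
    have "(\<Sum>a\<in>idx N. Q n a * w a x) = (\<Sum>a\<in>idx N. \<Sum>k\<in>idx N. Q n a * Qinv a k * v k x)"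
      unfolding w_def by (simp add: sum_distrib_left mult_ac)
    also have "\<dots> = (\<Sum>k\<in>idx N. \<Sum>a\<in>idx N. Q n a * Qinv a k * v k x)"
      by (rule sum.swap)
    also have "\<dots> = (\<Sum>k\<in>idx N. cm_mult N Q Qinv n k * v k x)"
      by (simp add: cm_mult_def sum_distrib_right)
    also have "\<dots> = (\<Sum>k\<in>idx N. cm_id n k * v k x)"
      using Qinv1 n by (intro sum.cong refl) simp
    also have "\<dots> = v n x"
      using n by (simp add: cm_id_def sum_delta_l)
    finally show ?thesis .
  qed
  have tri: "(\<Sum>m\<in>I. \<Sum>a\<in>I. \<Sum>d\<in>I. T m a d) = (\<Sum>a\<in>I. \<Sum>d\<in>I. \<Sum>m\<in>I. T m a d)"
    for I :: "int set" and T :: "int \<Rightarrow> int \<Rightarrow> int \<Rightarrow> real"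
    by (subst sum.swap) (rule sum.cong[OF refl], rule sum.swap)
  have Bform: "B n = (\<Sum>m\<in>idx N. cmod (Dj n m) * \<Phi> m) + (\<Sum>a\<in>idx N. cmod (Q n a) * (\<tau> * (cmod (\<Lambda> a) * (WW a * X a))))" for n
  proof -
    have "B n = (\<Sum>m\<in>idx N. cmod (Dj n m) * \<Phi> m) + (\<Sum>m\<in>idx N. \<Sum>a\<in>idx N. \<Sum>d\<in>idx N. cmod (Q n a) * cmod (\<Lambda> a) * \<tau> * X a * cmod (Qinv a d) * cmod (Dj d m) * \<Phi> m)"
      unfolding B_def by (simp add: ring_distribs sum.distrib sum_distrib_left sum_distrib_right mult_ac)
    also have "\<dots> = (\<Sum>m\<in>idx N. cmod (Dj n m) * \<Phi> m) + (\<Sum>a\<in>idx N. \<Sum>d\<in>idx N. \<Sum>m\<in>idx N. cmod (Q n a) * cmod (\<Lambda> a) * \<tau> * X a * cmod (Qinv a d) * cmod (Dj d m) * \<Phi> m)"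
      by (subst tri) (rule refl)
    also have "\<dots> = (\<Sum>m\<in>idx N. cmod (Dj n m) * \<Phi> m) + (\<Sum>a\<in>idx N. cmod (Q n a) * (\<tau> * (cmod (\<Lambda> a) * (WW a * X a))))"
      unfolding WW_def by (simp add: sum_distrib_left sum_distrib_right mult_ac)
    finally show ?thesis .
  qed
  have G'bound: "c0norm (G' n) \<le> \<tau> * B n" if n: "n \<in> idx N" for n
  proof (rule c0_least)
    fix x :: real assume x: "x \<in> {-1..1}"
    have "G' n x = complex_of_real \<tau> * ((\<Sum>a\<in>idx N. Q n a * w a x) + (\<Sum>a\<in>idx N. Q n a * (complex_of_real \<tau> * \<Lambda> a * J a x)))"
      unfolding G'_def by (simp add: distrib_left sum.distrib)
    also have "\<dots> = complex_of_real \<tau> * (v n x + (\<Sum>a\<in>idx N. Q n a * (complex_of_real \<tau> * \<Lambda> a * J a x)))"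
      by (simp only: Qw[OF n])
    finally have eq: "G' n x = complex_of_real \<tau> * (v n x + (\<Sum>a\<in>idx N. Q n a * (complex_of_real \<tau> * \<Lambda> a * J a x)))" .
    have "cmod (\<Sum>a\<in>idx N. Q n a * (complex_of_real \<tau> * \<Lambda> a * J a x)) \<le> (\<Sum>a\<in>idx N. cmod (Q n a) * (\<tau> * (cmod (\<Lambda> a) * (WW a * X a))))"
      using tau by (intro order_trans[OF norm_sum sum_mono])
        (auto simp: norm_mult intro!: mult_left_mono Jbd x)
    then have "cmod (v n x + (\<Sum>a\<in>idx N. Q n a * (complex_of_real \<tau> * \<Lambda> a * J a x))) \<le> B n"
      unfolding Bform using vbound[OF x, of n] by (meson add_mono norm_triangle_ineq order_trans)
    then show "cmod (G' n x) \<le> \<tau> * B n"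
      using tau by (simp add: eq norm_mult mult_left_mono)
  qed

  have err: "c0norm (\<lambda>t. g n t - interpK K (g n) t) \<le> \<sigma> * (\<tau> * B n)" if n: "n \<in> idx N" for n
  proof -
    have ieq: "interpK K (g n) = interpK K (G n)"
      unfolding interpK_def by (simp only: gG[OF n cheb_range])
    have "c0norm (\<lambda>t. g n t - interpK K (g n) t) = c0norm (\<lambda>t. G n t - interpK K (G n) t)"
      unfolding c0norm_def ieq by (rule SUP_cong) (auto simp: gG[OF n])
    also have "\<dots> \<le> \<sigma> * c0norm (G' n)"
      using sigma[rule_format, of "G n" "G' n"] Gder G'c by blast
    also have "\<dots> \<le> \<sigma> * (\<tau> * B n)"
      by (rule mult_left_mono[OF G'bound[OF n] sig0])
    finally show ?thesis .
  qed

  have absdiag: "cm_abs (cm_diag \<Lambda>) = cm_diag (\<lambda>a. complex_of_real (cmod (\<Lambda> a)))"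
    by (auto simp: cm_abs_def cm_diag_def fun_eq_iff)
  have D1e: "D1 a c = (if a = c then complex_of_real (\<tau> * X a) else 0)" if a: "a \<in> idx N" for a c
    unfolding D1_def X_def scale_diag exp_diag[OF a] by (cases "a = c") auto
  have D1mult: "cm_mult N D1 Z a m = complex_of_real (\<tau> * X a) * Z a m" if a: "a \<in> idx N" for a m Z
    unfolding cm_mult_def D1e[OF a] using a by (simp add: sum_delta_l)
  have inner: "cm_mult N (cm_diag (\<lambda>a. complex_of_real (cmod (\<Lambda> a)))) (cm_mult N D1 (cm_mult N (cm_abs Qinv) (cm_abs Dj))) a m
      = complex_of_real (cmod (\<Lambda> a) * (\<tau> * X a * (\<Sum>d\<in>idx N. cmod (Qinv a d) * cmod (Dj d m))))" if a: "a \<in> idx N" for a m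
    by (simp only: mult_diag_left[OF a] D1mult[OF a]) (simp add: cm_mult_def cm_abs_def)
  have Mentry: "M n m = complex_of_real (cmod (Dj n m) + (\<Sum>a\<in>idx N. cmod (Q n a) * (cmod (\<Lambda> a) * (\<tau> * X a * (\<Sum>d\<in>idx N. cmod (Qinv a d) * cmod (Dj d m))))))" for n m
  proof -
    have "M n m = cm_abs Dj n m + (\<Sum>a\<in>idx N. cm_abs Q n a * cm_mult N (cm_diag (\<lambda>a. complex_of_real (cmod (\<Lambda> a)))) (cm_mult N D1 (cm_mult N (cm_abs Qinv) (cm_abs Dj))) a m)"
      unfolding M_def cm_add_def absdiag cm_mult_def[of N "cm_abs Q"] ..
    also have "\<dots> = cm_abs Dj n m + (\<Sum>a\<in>idx N. cm_abs Q n a * complex_of_real (cmod (\<Lambda> a) * (\<tau> * X a * (\<Sum>d\<in>idx N. cmod (Qinv a d) * cmod (Dj d m)))))"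
      by (intro arg_cong2[where f="(+)"] refl sum.cong) (simp_all add: inner)
    also have "\<dots> = complex_of_real (cmod (Dj n m) + (\<Sum>a\<in>idx N. cmod (Q n a) * (cmod (\<Lambda> a) * (\<tau> * X a * (\<Sum>d\<in>idx N. cmod (Qinv a d) * cmod (Dj d m))))))"
      by (simp add: cm_abs_def)
    finally show ?thesis .
  qed
  define \<Phi>c where "\<Phi>c = (\<lambda>m. complex_of_real (\<Phi> m))"
  have MPhi: "cm_apply N M \<Phi>c n = complex_of_real (B n)" for n
    unfolding cm_apply_def B_def \<Phi>c_def Mentry by simp
  have l1M: "(\<Sum>n\<in>idx N. B n * \<nu> ^ nat \<bar>n\<bar>) \<le> l1nu N \<nu> (cm_apply N M \<Phi>c)"
    unfolding l1nu_def MPhi using nu by (intro sum_mono mult_right_mono) auto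
  have l1P: "l1nu N \<nu> \<Phi>c = l1nu_C0 N \<nu> \<phi>"
    unfolding l1nu_def l1nu_C0_def \<Phi>c_def by (intro sum.cong refl) (simp add: Phi_nonneg; simp add: \<Phi>_def)
  have final: "(\<Sum>n\<in>idx N. B n * \<nu> ^ nat \<bar>n\<bar>) \<le> opnorm_l1nu N \<nu> M * l1nu_C0 N \<nu> \<phi>"
  proof (cases "l1nu N \<nu> \<Phi>c = 0")
    case True
    have "\<Phi> m = 0" if m: "m \<in> idx N" for m
    proof -
      have "\<forall>m\<in>idx N. cmod (\<Phi>c m) * \<nu> ^ nat \<bar>m\<bar> = 0"
        using True unfolding l1nu_def using nu by (subst sum_nonneg_eq_0_iff[symmetric]) auto
      then show ?thesis using m nu by (auto simp: \<Phi>c_def)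
    qed
    then have "cm_apply N M \<Phi>c n = 0" for n
      unfolding cm_apply_def \<Phi>c_def by simp
    then have "l1nu N \<nu> (cm_apply N M \<Phi>c) = 0" by (simp add: l1nu_def)
    then show ?thesis using l1M True l1P by simp
  next
    case False
    have pos: "0 < l1nu N \<nu> \<Phi>c" using l1nu_nonneg[OF nu, of N \<Phi>c] False by linarith
    have "l1nu N \<nu> (cm_apply N M \<Phi>c) / l1nu N \<nu> \<Phi>c \<le> opnorm_l1nu N \<nu> M"
      unfolding opnorm_l1nu_def by (rule cSup_upper[OF _ opnorm_bdd[OF nu]]) (use False in blast)
    then have "l1nu N \<nu> (cm_apply N M \<Phi>c) \<le> opnorm_l1nu N \<nu> M * l1nu N \<nu> \<Phi>c"
      using pos by (simp add: divide_le_eq)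
    then show ?thesis using l1M l1P by simp
  qed

  have "l1nu_C0 N \<nu> (\<lambda>n t. g n t - interpK K (g n) t) \<le> (\<Sum>n\<in>idx N. \<sigma> * (\<tau> * B n) * \<nu> ^ nat \<bar>n\<bar>)"
    unfolding l1nu_C0_def using nu by (intro sum_mono mult_right_mono err) auto
  also have "\<dots> = \<tau> * \<sigma> * (\<Sum>n\<in>idx N. B n * \<nu> ^ nat \<bar>n\<bar>)"
    by (simp add: sum_distrib_left mult_ac)
  also have "\<dots> \<le> \<tau> * \<sigma> * (opnorm_l1nu N \<nu> M * l1nu_C0 N \<nu> \<phi>)"
    using sig0 tau by (intro mult_left_mono final) auto
  finally have main: "l1nu_C0 N \<nu> (\<lambda>n t. g n t - interpK K (g n) t) \<le> \<tau> * \<sigma> * opnorm_l1nu N \<nu> M * l1nu_C0 N \<nu> \<phi>"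
    by (simp add: mult_ac)
  show ?thesis
    using main unfolding Let_def L_def[symmetric] Dj_def[symmetric] D1_def[symmetric] M_def[symmetric] g_def .
qed


end
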